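(* Let $T_1,T_2$ be equidistant trees with $n=3$ leaves such that $T_1$ and $T_2$ have different tree topologies. Then, moving along the tropical line segment $\Gamma_{T_1,T_2}$ from $T_1$ to $T_2$, the tree topology changes from the tree topology of $T_1$ to that of the star tree, and then from the star tree to the tree topology of $T_2$.
   Context: Max-plus arithmetic: $a\oplus b=\max\{a,b\}$, $a\odot b=a+b$; vectors in $\mathbb{R}^3$ with coordinates indexed by pairs $12,13,23$ are considered modulo $\mathbb{R}\mathbf 1$. An equidistant tree is a rooted phylogenetic tree on leaves $\{1,2,3\}$ with nonnegative edge lengths and all root-to-leaf distances equal; its ultrametric $u=(u_{12},u_{13},u_{23})$ consists of pairwise leaf distances, and every ultrametric (maximum of the three coordinates attained at least twice) determines a unique such tree. The star tree has all leaves attached to the root (constant ultrametric). $\Gamma_{T_1,T_2}$ denotes the tropical line segment $\{a\odot u\oplus b\odot v:a,b\in\mathbb R\}$ between the ultrametrics $u,v$ of $T_1,T_2$; each of its points is an ultrametric and thus an equidistant tree. *)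

theory Defs
  imports Main "HOL-Library.Library"
begin

text \<open>Vectors in R^3 with coordinates indexed by the pairs 12, 13, 23,
  represented as triples (u12, u13, u23).\<close>
type_synonym vec3 = "real \<times> real \<times> real"

definition c12 :: "vec3 \<Rightarrow> real" where "c12 u = fst u"
definition c13 :: "vec3 \<Rightarrow> real" where "c13 u = fst (snd u)"
definition c23 :: "vec3 \<Rightarrow> real" where "c23 u = snd (snd u)"

definition trop_add :: "vec3 \<Rightarrow> vec3 \<Rightarrow> vec3" (infixl "\<oplus>\<^sub>t" 65) where
  "u \<oplus>\<^sub>t v = (max (c12 u) (c12 v), max (c13 u) (c13 v), max (c23 u) (c23 v))"

definition trop_smult :: "real \<Rightarrow> vec3 \<Rightarrow> vec3" (infixl "\<odot>\<^sub>t" 70) where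
  "a \<odot>\<^sub>t u = (a + c12 u, a + c13 u, a + c23 u)"

definition ultrametric :: "vec3 \<Rightarrow> bool" where
  "ultrametric u \<longleftrightarrow>
     (let m = max (c12 u) (max (c13 u) (c23 u)) in
       (c12 u = m \<and> c13 u = m) \<or> (c12 u = m \<and> c23 u = m) \<or> (c13 u = m \<and> c23 u = m))"

datatype topology = Star | Cherry12 | Cherry13 | Cherry23

text \<open>Topology of the (unique) equidistant tree with ultrametric u: leaves i,j form
  a cherry iff their distance is strictly smaller than the other two; otherwise
  (all distances equal) it is the star tree.\<close>
definition tree_topology :: "vec3 \<Rightarrow> topology" where
  "tree_topology u =
    (if c12 u < c13 u \<and> c12 u < c23 u then Cherry12
     else if c13 u < c12 u \<and> c13 u < c23 u then Cherry13
     else if c23 u < c12 u \<and> c23 u < c13 u then Cherry23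
     else Star)"

end

theory Submission
  imports Defs
begin

lemma uc: "ultrametric (u1,u2,u3) \<Longrightarrow> (u1<u2 \<and> u3=u2) \<or> (u2<u1 \<and> u3=u1) \<or> (u3<u1 \<and> u2=u1) \<or> (u2=u1 \<and> u3=u1)"
  unfolding ultrametric_def c12_def c13_def c23_def Let_def by (auto simp: max_def split: if_splits)


lemma core:
  fixes u1 u2 u3 v1 v2 v3 d :: real
  assumes "ultrametric (u1,u2,u3)" "ultrametric (v1,v2,v3)"
    and ne: "tree_topology (u1,u2,u3) \<noteq> tree_topology (v1,v2,v3)"
  defines "t \<equiv> max u1 (max u2 u3) - max v1 (max v2 v3)"
  shows "(d < t \<longrightarrow> tree_topology (max u1 (v1+d), max u2 (v2+d), max u3 (v3+d)) = tree_topology (u1,u2,u3))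
    \<and> (d = t \<longrightarrow> tree_topology (max u1 (v1+d), max u2 (v2+d), max u3 (v3+d)) = Star)
    \<and> (t < d \<longrightarrow> tree_topology (max u1 (v1+d), max u2 (v2+d), max u3 (v3+d)) = tree_topology (v1,v2,v3))"
  using uc[OF assms(1)] uc[OF assms(2)] ne unfolding t_def
  apply (elim disjE conjE; hypsubst)
  apply (simp_all add: tree_topology_def c12_def c13_def c23_def max_def split: if_splits)
  done
theorem lemma1:
  fixes u v :: vec3
  assumes "ultrametric u" and "ultrametric v"
    and "tree_topology u \<noteq> tree_topology v"
  shows "\<exists>t1 t2. t1 \<le> t2 \<and>
           (\<forall>a b. b - a < t1 \<longrightarrow> tree_topology ((a \<odot>\<^sub>t u) \<oplus>\<^sub>t (b \<odot>\<^sub>t v)) = tree_topology u) \<and>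
           (\<forall>a b. t1 \<le> b - a \<and> b - a \<le> t2 \<longrightarrow> tree_topology ((a \<odot>\<^sub>t u) \<oplus>\<^sub>t (b \<odot>\<^sub>t v)) = Star) \<and>
           (\<forall>a b. t2 < b - a \<longrightarrow> tree_topology ((a \<odot>\<^sub>t u) \<oplus>\<^sub>t (b \<odot>\<^sub>t v)) = tree_topology v)"
proof -
  obtain u1 u2 u3 where U: "u = (u1,u2,u3)" by (cases u) auto
  obtain v1 v2 v3 where V: "v = (v1,v2,v3)" by (cases v) auto
  define t where "t = max u1 (max u2 u3) - max v1 (max v2 v3)"
  have W: "(a \<odot>\<^sub>t u) \<oplus>\<^sub>t (b \<odot>\<^sub>t v) = (a + max u1 (v1+(b-a)), a + max u2 (v2+(b-a)), a + max u3 (v3+(b-a)))" for a b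
    by (simp add: U V trop_add_def trop_smult_def c12_def c13_def c23_def max_def)
  have S: "tree_topology (a + x, a + y, a + z) = tree_topology (x,y,z)" for a x y z :: real
    by (simp add: tree_topology_def c12_def c13_def c23_def)
  note C = core[OF assms(1,2)[unfolded U V] assms(3)[unfolded U V], folded t_def]
  show ?thesis
  proof (intro exI[of _ t] conjI allI impI order.refl)
    fix a b :: real
    show "b - a < t \<Longrightarrow> tree_topology ((a \<odot>\<^sub>t u) \<oplus>\<^sub>t (b \<odot>\<^sub>t v)) = tree_topology u"
      unfolding W S using C[of "b-a"] U by simp
    show "t \<le> b - a \<and> b - a \<le> t \<Longrightarrow> tree_topology ((a \<odot>\<^sub>t u) \<oplus>\<^sub>t (b \<odot>\<^sub>t v)) = Star"
      unfolding W S using C[of "b-a"] by simp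
    show "t < b - a \<Longrightarrow> tree_topology ((a \<odot>\<^sub>t u) \<oplus>\<^sub>t (b \<odot>\<^sub>t v)) = tree_topology v"
      unfolding W S using C[of "b-a"] V by simp
  qed
qed

end
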